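(* For every $n\ge1$, \[ R_n=\inf\big\{R_n(\mathbb{P}):\ \mathbb{P}\in\mathcal{P}_n,\ {}^{\gamma}\mathbb{P}\pi=\mathbb{P}\ \text{for all }(\gamma,\pi)\in S_{inv}\times S_n\big\}. \]
   Context: Scheduling on two machines with $n$ tasks. A processing-time matrix is $T\in\mathbb{R}_{++}^{2\times n}$; an allocation is $X\in\{0,1\}^{2\times n}$ with $X_{1j}+X_{2j}=1$; makespan $M(X,T)=\max_{i\in\{1,2\}}\sum_jX_{ij}T_{ij}$; $M^*(T)=\min_XM(X,T)$. $\mathcal{P}_n$ is the set of Borel probability measures on $\mathbb{R}^n$ supported in $\mathbb{R}_{++}^n$. For $\mathbb{P}\in\mathcal{P}_n$, algorithm $\mathcal{A}^{\mathbb{P}}$ draws $\mathbf{z}\sim\mathbb{P}$ and sends task $j$ to machine 1 iff $T_{1j}/T_{2j}<z_j$ (else to machine 2); $M(\mathbb{P},T)$ is its expected makespan, $R_n(\mathbb{P})=\sup_TM(\mathbb{P},T)/M^*(T)\in[1,\infty]$, and $R_n=\inf_{\mathbb{P}\in\mathcal{P}_n}R_n(\mathbb{P})$. $S_n$ is the symmetric group on $[n]$; $\mathbf{z}\pi$ is $\mathbf{z}$ with entries permuted by $\pi$. $S_{inv}=\{id,inv\}$ acts by ${}^{id}\mathbf{x}=\mathbf{x}$, ${}^{inv}\mathbf{x}=(1/x_1,\dots,1/x_n)$. ${}^{\gamma}\mathbb{P}\pi$ is the distribution of ${}^{\gamma}\mathbf{z}\pi$ for $\mathbf{z}\sim\mathbb{P}$.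 *)

theory Defs
  imports "HOL-Probability.Probability"
begin

text \<open>Two machines, tasks indexed by the finite type 'n (so n = CARD('n) \<ge> 1).
  A processing-time matrix T is given by its two rows T1 T2 :: real^'n.\<close>

definition makespan :: "('n::finite \<Rightarrow> bool) \<Rightarrow> real^'n \<Rightarrow> real^'n \<Rightarrow> real" where
  "makespan X T1 T2 = max (\<Sum>j\<in>{j. X j}. T1 $ j) (\<Sum>j\<in>{j. \<not> X j}. T2 $ j)"

definition opt_makespan :: "real^'n::finite \<Rightarrow> real^'n \<Rightarrow> real" where
  "opt_makespan T1 T2 = Min (range (\<lambda>X. makespan X T1 T2))"

definition pos_times :: "((real^('n::finite)) \<times> (real^'n)) set" where
  "pos_times = {(T1, T2). \<forall>j. 0 < T1 $ j \<and> 0 < T2 $ j}"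

definition alg_alloc :: "real^'n::finite \<Rightarrow> real^'n \<Rightarrow> real^'n \<Rightarrow> ('n \<Rightarrow> bool)" where
  "alg_alloc z T1 T2 = (\<lambda>j. T1 $ j / T2 $ j < z $ j)"

definition Pn :: "(real^'n::finite) measure set" where
  "Pn = {P. prob_space P \<and> sets P = sets (borel :: (real^'n) measure)
             \<and> measure P {z. \<forall>j. 0 < z $ j} = 1}"

definition exp_makespan :: "(real^'n::finite) measure \<Rightarrow> real^'n \<Rightarrow> real^'n \<Rightarrow> real" where
  "exp_makespan P T1 T2 = (\<integral>z. makespan (alg_alloc z T1 T2) T1 T2 \<partial>P)"

definition ratio :: "(real^'n::finite) measure \<Rightarrow> ereal" where
  "ratio P = (SUP T\<in>pos_times. ereal (exp_makespan P (fst T) (snd T) / opt_makespan (fst T) (snd T)))"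

text \<open>Group actions: inversion (for gamma = True) followed by permutation of entries.\<close>
definition inv_act :: "bool \<Rightarrow> real^'n::finite \<Rightarrow> real^'n" where
  "inv_act g z = (if g then (\<chi> j. 1 / z $ j) else z)"

definition perm_act :: "real^'n::finite \<Rightarrow> ('n \<Rightarrow> 'n) \<Rightarrow> real^'n" where
  "perm_act z \<pi> = (\<chi> j. z $ (\<pi> j))"

definition symmetric_dist :: "(real^'n::finite) measure \<Rightarrow> bool" where
  "symmetric_dist P \<longleftrightarrow> (\<forall>g::bool. \<forall>\<pi>. \<pi> permutes (UNIV :: 'n set) \<longrightarrow>
       distr P borel (\<lambda>z. perm_act (inv_act g z) \<pi>) = P)"

end

theory Submission
  imports Defs
begin

definition act :: "bool \<times> ('n::finite \<Rightarrow> 'n) \<Rightarrow> real^'n \<Rightarrow> real^'n" where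
  "act a z = perm_act (inv_act (fst a) z) (snd a)"

definition Grp :: "(bool \<times> ('n::finite \<Rightarrow> 'n)) set" where
  "Grp = UNIV \<times> {\<pi>. \<pi> permutes (UNIV::'n set)}"

lemma vec_measurableI:
  fixes f :: "'a \<Rightarrow> real^'n::finite"
  assumes "\<And>i. (\<lambda>x. f x $ i) \<in> borel_measurable M"
  shows "f \<in> borel_measurable M"
proof (rule borel_measurable_euclidean_space[THEN iffD2], rule ballI)
  fix b :: "real^'n" assume "b \<in> Basis"
  then have "b \<in> (\<Union>i. \<Union>u\<in>(Basis::real set). {axis i u})" by (simp only: Basis_vec_def)
  then obtain i u where u: "u \<in> (Basis::real set)" and b0: "b = axis i u" by blast
  have "u = 1" using u by (simp add: Basis_real_def)
  then have b: "b = axis i 1" using b0 by simp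
  have eq2: "(\<lambda>x. f x \<bullet> b) = (\<lambda>x. f x $ i)" by (simp add: b inner_axis)
  show "(\<lambda>x. f x \<bullet> b) \<in> borel_measurable M" unfolding eq2 by (rule assms)
qed

lemma act_measurable[measurable]: "act a \<in> borel_measurable borel"
proof (rule vec_measurableI)
  fix i
  show "(\<lambda>x. act a x $ i) \<in> borel_measurable borel"
  proof (cases "fst a")
    case True
    have eq: "(\<lambda>x. act a x $ i) = (\<lambda>x. inverse (x $ snd a i))"
      using True by (simp add: act_def perm_act_def inv_act_def inverse_eq_divide)
    show ?thesis unfolding eq by (rule borel_measurable_inverse[OF borel_measurable_nth])
  next
    case False
    have eq: "(\<lambda>x. act a x $ i) = (\<lambda>x. x $ snd a i)"
      using False by (simp add: act_def perm_act_def inv_act_def)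
    show ?thesis unfolding eq by (rule borel_measurable_nth)
  qed
qed

lemma finite_Grp: "finite (Grp :: (bool \<times> ('n::finite \<Rightarrow> 'n)) set)"
  unfolding Grp_def by (simp add: finite_permutations)

lemma Grp_ne: "(Grp :: (bool \<times> ('n::finite \<Rightarrow> 'n)) set) \<noteq> {}"
proof -
  have "(False, id) \<in> (Grp :: (bool \<times> ('n::finite \<Rightarrow> 'n)) set)"
    by (simp add: Grp_def permutes_id)
  then show ?thesis by auto
qed

lemma inv_inv_act: "inv_act g (inv_act g' z) = inv_act (g \<noteq> g') z"
  unfolding inv_act_def by (cases g; cases g') (simp_all add: vec_eq_iff)

lemma inv_perm_act: "inv_act g (perm_act z \<pi>) = perm_act (inv_act g z) \<pi>"
  unfolding inv_act_def perm_act_def by (cases g) (simp_all add: vec_eq_iff)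

lemma perm_perm_act: "perm_act (perm_act z \<pi>) \<sigma> = perm_act z (\<pi> \<circ> \<sigma>)"
  unfolding perm_act_def by (simp add: vec_eq_iff)

lemma act_comp: "act h (act a z) = act (fst h \<noteq> fst a, snd a \<circ> snd h) z"
  unfolding act_def by (simp add: inv_perm_act inv_inv_act perm_perm_act)

lemma Grp_bij:
  fixes h :: "bool \<times> ('a::finite \<Rightarrow> 'a)"
  assumes "h \<in> Grp"
  shows "bij_betw (\<lambda>a. (fst h \<noteq> fst a, snd a \<circ> snd h)) Grp Grp"
proof (rule bij_betw_byWitness[where f'="\<lambda>a. (fst h \<noteq> fst a, snd a \<circ> inv (snd h))"])
  have p: "snd h permutes UNIV" using assms by (auto simp: Grp_def)
  show "\<forall>a\<in>Grp. (fst h \<noteq> fst (fst h \<noteq> fst a, snd a \<circ> snd h), snd (fst h \<noteq> fst a, snd a \<circ> snd h) \<circ> inv (snd h)) = a"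
    using p by (auto simp: comp_assoc permutes_inv_o)
  show "\<forall>a\<in>Grp. (fst h \<noteq> fst (fst h \<noteq> fst a, snd a \<circ> inv (snd h)), snd (fst h \<noteq> fst a, snd a \<circ> inv (snd h)) \<circ> snd h) = a"
    using p by (auto simp: comp_assoc permutes_inv_o)
  show "(\<lambda>a. (fst h \<noteq> fst a, snd a \<circ> snd h)) ` Grp \<subseteq> Grp"
  proof (rule image_subsetI)
    fix a :: "bool \<times> ('a \<Rightarrow> 'a)" assume "a \<in> Grp"
    then have "snd a permutes UNIV" by (auto simp: Grp_def)
    then show "(fst h \<noteq> fst a, snd a \<circ> snd h) \<in> Grp"
      using p by (simp add: Grp_def permutes_compose)
  qed
  show "(\<lambda>a. (fst h \<noteq> fst a, snd a \<circ> inv (snd h))) ` Grp \<subseteq> Grp"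
  proof (rule image_subsetI)
    fix a :: "bool \<times> ('a \<Rightarrow> 'a)" assume "a \<in> Grp"
    then have "snd a permutes UNIV" by (auto simp: Grp_def)
    then show "(fst h \<noteq> fst a, snd a \<circ> inv (snd h)) \<in> Grp"
      using p by (simp add: Grp_def permutes_compose permutes_inv)
  qed
qed

definition pos :: "(real^'n::finite) set" where "pos = {z. \<forall>j. 0 < z $ j}"

lemma pos_sets[measurable]: "pos \<in> sets borel"
  unfolding pos_def by measurable

lemma act_pos:
  fixes a :: "bool \<times> ('n::finite \<Rightarrow> 'n)"
  assumes "a \<in> Grp" shows "act a -` pos = pos"
proof -
  from assms have p: "snd a permutes UNIV" by (auto simp: Grp_def)
  have "(\<forall>j. 0 < w $ (snd a j)) \<longleftrightarrow> (\<forall>j. 0 < w $ j)" for w :: "real^'n"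
  proof
    assume h: "\<forall>j. 0 < w $ (snd a j)"
    show "\<forall>j. 0 < w $ j"
    proof
      fix j
      have "0 < w $ (snd a (inv (snd a) j))" using h by blast
      then show "0 < w $ j" by (simp add: permutes_inverses(1)[OF p])
    qed
  qed auto
  then show ?thesis
    unfolding pos_def act_def perm_act_def inv_act_def by auto
qed


definition symm :: "(real^'n::finite) measure \<Rightarrow> (real^'n) measure" where
  "symm P = uniform_count_measure Grp \<bind> (\<lambda>a. distr P borel (act a))"

lemma space_borel_P: "sets P = sets borel \<Longrightarrow> space P = UNIV"
  using sets_eq_imp_space_eq by fastforce

lemma act_meas_P: "sets P = sets borel \<Longrightarrow> act a \<in> P \<rightarrow>\<^sub>M borel"
  using act_measurable measurable_cong_sets by blast

lemma U_space: "uniform_count_measure (Grp :: (bool \<times> ('n::finite \<Rightarrow> 'n)) set) \<in> space (prob_algebra (count_space Grp))"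
  unfolding space_prob_algebra
  by (simp add: sets_uniform_count_measure_count_space prob_space_uniform_count_measure finite_Grp Grp_ne)

lemma kernel_meas:
  fixes P :: "(real^'n::finite) measure"
  assumes "prob_space P" "sets P = sets borel"
  shows "(\<lambda>a. distr P borel (act a)) \<in> count_space (Grp :: (bool \<times> ('n \<Rightarrow> 'n)) set) \<rightarrow>\<^sub>M prob_algebra borel"
  unfolding measurable_count_space_eq1 space_prob_algebra
proof (rule Pi_I)
  fix a :: "bool \<times> ('n \<Rightarrow> 'n)"
  have "prob_space (distr P borel (act a))"
    by (rule prob_space.prob_space_distr[OF assms(1) act_meas_P[OF assms(2)]])
  then show "distr P borel (act a) \<in> {N. sets N = sets borel \<and> prob_space N}" by simp
qed

lemma kernel_meas2:
  fixes P :: "(real^'n::finite) measure"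
  assumes "prob_space P" "sets P = sets borel"
  shows "(\<lambda>a. distr P borel (act a)) \<in> uniform_count_measure (Grp :: (bool \<times> ('n \<Rightarrow> 'n)) set) \<rightarrow>\<^sub>M subprob_algebra borel"
  using measurable_prob_algebraD[OF kernel_meas[OF assms]]
  by (simp add: measurable_cong_sets[OF sets_uniform_count_measure_count_space refl])

lemma symm_prob:
  fixes P :: "(real^'n::finite) measure"
  assumes "prob_space P" "sets P = sets borel"
  shows "prob_space (symm P)" "sets (symm P) = sets borel"
  unfolding symm_def
  using prob_space_bind'[OF U_space kernel_meas[OF assms]] sets_bind'[OF U_space kernel_meas[OF assms]]
  by auto

lemma emeasure_symm:
  fixes P :: "(real^'n::finite) measure"
  assumes "prob_space P" "sets P = sets borel" "A \<in> sets borel"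
  shows "emeasure (symm P) A = (\<Sum>a\<in>(Grp :: (bool \<times> ('n \<Rightarrow> 'n)) set). ennreal (1 / real (card (Grp :: (bool \<times> ('n \<Rightarrow> 'n)) set))) * emeasure P (act a -` A))"
proof -
  have "emeasure (symm P) A = (\<integral>\<^sup>+a. emeasure (distr P borel (act a)) A \<partial>uniform_count_measure Grp)"
    unfolding symm_def
    by (rule emeasure_bind_prob_algebra[OF U_space kernel_meas[OF assms(1,2)] assms(3)])
  also have "\<dots> = (\<Sum>a\<in>(Grp :: (bool \<times> ('n \<Rightarrow> 'n)) set). ennreal (1 / real (card (Grp :: (bool \<times> ('n \<Rightarrow> 'n)) set))) * emeasure (distr P borel (act a)) A)"
    unfolding uniform_count_measure_def
    by (simp add: nn_integral_point_measure_finite finite_Grp)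
  also have "\<dots> = (\<Sum>a\<in>(Grp :: (bool \<times> ('n \<Rightarrow> 'n)) set). ennreal (1 / real (card (Grp :: (bool \<times> ('n \<Rightarrow> 'n)) set))) * emeasure P (act a -` A))"
    using assms by (simp add: emeasure_distr act_meas_P space_borel_P)
  finally show ?thesis .
qed

lemma nn_integral_symm:
  fixes P :: "(real^'n::finite) measure"
  assumes "prob_space P" "sets P = sets borel" "f \<in> borel_measurable borel"
  shows "(\<integral>\<^sup>+z. f z \<partial>symm P) = (\<Sum>a\<in>(Grp :: (bool \<times> ('n \<Rightarrow> 'n)) set). ennreal (1 / real (card (Grp :: (bool \<times> ('n \<Rightarrow> 'n)) set))) * (\<integral>\<^sup>+z. f (act a z) \<partial>P))"
proof -
  have "(\<integral>\<^sup>+z. f z \<partial>symm P) = (\<integral>\<^sup>+a. (\<integral>\<^sup>+z. f z \<partial>distr P borel (act a)) \<partial>uniform_count_measure Grp)"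
    unfolding symm_def
    by (rule nn_integral_bind[OF assms(3) kernel_meas2[OF assms(1,2)]])
  also have "\<dots> = (\<Sum>a\<in>(Grp :: (bool \<times> ('n \<Rightarrow> 'n)) set). ennreal (1 / real (card (Grp :: (bool \<times> ('n \<Rightarrow> 'n)) set))) * (\<integral>\<^sup>+z. f z \<partial>distr P borel (act a)))"
    unfolding uniform_count_measure_def
    by (simp add: nn_integral_point_measure_finite finite_Grp)
  also have "\<dots> = (\<Sum>a\<in>(Grp :: (bool \<times> ('n \<Rightarrow> 'n)) set). ennreal (1 / real (card (Grp :: (bool \<times> ('n \<Rightarrow> 'n)) set))) * (\<integral>\<^sup>+z. f (act a z) \<partial>P))"
    using assms by (simp add: nn_integral_distr act_meas_P)
  finally show ?thesis .
qed

lemma card_inv_sum: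
  assumes "finite A" "A \<noteq> {}"
  shows "(\<Sum>a\<in>A. ennreal (1 / real (card A)) * x) = x"
proof -
  have c: "0 < real (card A)" using assms by (auto simp: card_gt_0_iff)
  have "ennreal (real (card A)) * ennreal (1 / real (card A)) = ennreal (real (card A) * (1 / real (card A)))"
    by (rule ennreal_mult[symmetric]) auto
  also have "\<dots> = 1" using c by simp
  finally have m: "ennreal (real (card A)) * ennreal (1 / real (card A)) = 1" .
  have "(\<Sum>a\<in>A. ennreal (1 / real (card A)) * x) = of_nat (card A) * (ennreal (1 / real (card A)) * x)"
    by simp
  also have "\<dots> = (ennreal (real (card A)) * ennreal (1 / real (card A))) * x"
    by (simp add: ennreal_of_nat_eq_real_of_nat mult.assoc)
  also have "\<dots> = x" by (simp add: m)
  finally show ?thesis .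
qed

lemma symm_symmetric:
  fixes P :: "(real^'n::finite) measure"
  assumes P: "prob_space P" "sets P = sets borel"
  shows "symmetric_dist (symm P)"
  unfolding symmetric_dist_def
proof (intro allI impI)
  fix g :: bool and \<pi> :: "'n \<Rightarrow> 'n"
  assume p: "\<pi> permutes UNIV"
  define h where "h = (g, \<pi>)"
  have hG: "h \<in> Grp" using p by (simp add: h_def Grp_def)
  have eq: "(\<lambda>z. perm_act (inv_act g z) \<pi>) = act h" by (auto simp: act_def h_def)
  have ss: "sets (symm P) = sets borel" using symm_prob[OF P] by simp
  show "distr (symm P) borel (\<lambda>z. perm_act (inv_act g z) \<pi>) = symm P"
    unfolding eq
  proof (rule measure_eqI)
    show "sets (distr (symm P) borel (act h)) = sets (symm P)" using ss by simp
    fix A assume "A \<in> sets (distr (symm P) borel (act h))"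
    then have A: "A \<in> sets borel" by simp
    have A': "act h -` A \<in> sets borel" using measurable_sets[OF act_measurable A] by simp
    have "emeasure (distr (symm P) borel (act h)) A = emeasure (symm P) (act h -` A)"
      using A ss by (simp add: emeasure_distr act_meas_P space_borel_P)
    also have "\<dots> = (\<Sum>a\<in>(Grp :: (bool \<times> ('n \<Rightarrow> 'n)) set). ennreal (1 / real (card (Grp :: (bool \<times> ('n \<Rightarrow> 'n)) set))) * emeasure P (act a -` (act h -` A)))"
      by (rule emeasure_symm[OF P A'])
    also have "\<dots> = (\<Sum>a\<in>(Grp :: (bool \<times> ('n \<Rightarrow> 'n)) set). ennreal (1 / real (card (Grp :: (bool \<times> ('n \<Rightarrow> 'n)) set))) * emeasure P (act ((\<lambda>a. (fst h \<noteq> fst a, snd a \<circ> snd h)) a) -` A))"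
      by (intro sum.cong refl) (simp add: vimage_def act_comp)
    also have "\<dots> = (\<Sum>a\<in>(Grp :: (bool \<times> ('n \<Rightarrow> 'n)) set). ennreal (1 / real (card (Grp :: (bool \<times> ('n \<Rightarrow> 'n)) set))) * emeasure P (act a -` A))"
      by (rule sum.reindex_bij_betw[OF Grp_bij[OF hG], where g="\<lambda>b. ennreal (1 / real (card (Grp :: (bool \<times> ('n \<Rightarrow> 'n)) set))) * emeasure P (act b -` A)"])
    also have "\<dots> = emeasure (symm P) A"
      by (rule emeasure_symm[OF P A, symmetric])
    finally show "emeasure (distr (symm P) borel (act h)) A = emeasure (symm P) A" .
  qed
qed

lemma symm_Pn:
  fixes P :: "(real^'n::finite) measure"
  assumes "P \<in> Pn"
  shows "symm P \<in> Pn"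
proof -
  have P: "prob_space P" "sets P = sets borel" and m: "measure P pos = 1"
    using assms by (auto simp: Pn_def pos_def)
  have e: "emeasure P pos = 1"
    using m finite_measure.emeasure_eq_measure[OF prob_space.axioms(1)[OF P(1)]] by simp
  have "emeasure (symm P) pos = (\<Sum>a\<in>(Grp :: (bool \<times> ('n \<Rightarrow> 'n)) set). ennreal (1 / real (card (Grp :: (bool \<times> ('n \<Rightarrow> 'n)) set))) * emeasure P (act a -` pos))"
    by (rule emeasure_symm[OF P pos_sets])
  also have "\<dots> = (\<Sum>a\<in>(Grp :: (bool \<times> ('n \<Rightarrow> 'n)) set). ennreal (1 / real (card (Grp :: (bool \<times> ('n \<Rightarrow> 'n)) set))) * 1)"
    by (intro sum.cong refl) (simp add: act_pos e)
  also have "\<dots> = 1" by (rule card_inv_sum[OF finite_Grp Grp_ne])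
  finally have "emeasure (symm P) pos = 1" .
  then have "measure (symm P) pos = 1" by (simp add: measure_def)
  then show ?thesis using symm_prob[OF P] by (simp add: Pn_def pos_def)
qed

lemma makespan_alt:
  "makespan X T1 T2 = max (\<Sum>j\<in>UNIV. if X j then T1 $ j else 0) (\<Sum>j\<in>UNIV. if X j then 0 else T2 $ j)"
  unfolding makespan_def
  by (simp add: sum.If_cases Collect_neg_eq)

lemma makespan_meas:
  fixes T1 T2 :: "real^'n::finite"
  assumes [measurable]: "\<And>j. Measurable.pred M (\<lambda>z. D z j)"
  shows "(\<lambda>z. makespan (D z) T1 T2) \<in> borel_measurable M"
  unfolding makespan_alt by measurable

lemma makespan_nonneg:
  fixes T1 T2 :: "real^'n::finite"
  assumes "\<And>j. 0 \<le> T1 $ j" "\<And>j. 0 \<le> T2 $ j"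
  shows "0 \<le> makespan X T1 T2"
  unfolding makespan_alt using assms by (simp add: sum_nonneg le_max_iff_disj)

lemma makespan_le:
  fixes T1 T2 :: "real^'n::finite"
  assumes "\<And>j. 0 \<le> T1 $ j" "\<And>j. 0 \<le> T2 $ j"
  shows "makespan X T1 T2 \<le> (\<Sum>j\<in>UNIV. T1 $ j) + (\<Sum>j\<in>UNIV. T2 $ j)"
proof -
  have a: "(\<Sum>j\<in>UNIV. if X j then T1 $ j else 0) \<le> (\<Sum>j\<in>UNIV. T1 $ j)"
    using assms by (intro sum_mono) auto
  have b: "(\<Sum>j\<in>UNIV. if X j then 0 else T2 $ j) \<le> (\<Sum>j\<in>UNIV. T2 $ j)"
    using assms by (intro sum_mono) auto
  have c: "0 \<le> (\<Sum>j\<in>UNIV. T1 $ j)" "0 \<le> (\<Sum>j\<in>UNIV. T2 $ j)"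
    using assms by (auto intro: sum_nonneg)
  show ?thesis unfolding makespan_alt using a b c by linarith
qed

lemma makespan_swap: "makespan (\<lambda>j. \<not> X j) T1 T2 = makespan X T2 T1"
proof -
  have ifnot: "\<And>P a b. (if \<not> P then a else b) = (if P then b else (a::real))" by simp
  show ?thesis unfolding makespan_alt by (simp only: ifnot max.commute)
qed

lemma perm_act_nth: "perm_act z \<pi> $ j = z $ \<pi> j"
  by (simp add: perm_act_def)

lemma makespan_perm:
  fixes T1 T2 :: "real^'n::finite"
  assumes p: "\<pi> permutes UNIV"
  shows "makespan (\<lambda>j. X (\<pi> j)) T1 T2 = makespan X (perm_act T1 (inv \<pi>)) (perm_act T2 (inv \<pi>))"
proof -
  have bij: "bij_betw (inv \<pi>) UNIV UNIV"
    using permutes_inv[OF p] permutes_imp_bij by blast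
  have s: "(\<Sum>j\<in>UNIV. g j) = (\<Sum>k\<in>UNIV. g (inv \<pi> k))" for g :: "'n \<Rightarrow> real"
    using sum.reindex_bij_betw[OF bij, of g] by simp
  have pi: "\<pi> (inv \<pi> k) = k" for k using permutes_inverses(1)[OF p] by simp
  have e1: "(\<Sum>j\<in>UNIV. if X (\<pi> j) then T1 $ j else 0) = (\<Sum>k\<in>UNIV. if X k then T1 $ inv \<pi> k else 0)"
    using s[of "\<lambda>j. if X (\<pi> j) then T1 $ j else 0"] by (simp add: pi)
  have e2: "(\<Sum>j\<in>UNIV. if X (\<pi> j) then 0 else T2 $ j) = (\<Sum>k\<in>UNIV. if X k then 0 else T2 $ inv \<pi> k)"
    using s[of "\<lambda>j. if X (\<pi> j) then 0 else T2 $ j"] by (simp add: pi)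
  show ?thesis
    unfolding makespan_alt perm_act_nth by (simp only: e1 e2)
qed

lemma range_eqI:
  assumes "\<And>X. f X = g (h X)" "\<And>Y. \<exists>X. h X = Y"
  shows "range f = range g"
  using assms by (auto simp: image_def) (metis)

lemma opt_swap: "opt_makespan T2 T1 = opt_makespan T1 T2"
proof -
  have "range (\<lambda>X. makespan X T2 T1) = range (\<lambda>X. makespan X T1 T2)"
  proof (rule range_eqI[where h="\<lambda>X j. \<not> X j"])
    show "makespan X T2 T1 = makespan (\<lambda>j. \<not> X j) T1 T2" for X by (rule makespan_swap[symmetric])
    show "\<exists>X. (\<lambda>j. \<not> X j) = Y" for Y :: "'a \<Rightarrow> bool" by (rule exI[where x="\<lambda>j. \<not> Y j"]) simp
  qed
  then show ?thesis unfolding opt_makespan_def by simp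
qed

lemma opt_perm:
  fixes T1 T2 :: "real^'n::finite"
  assumes p: "\<pi> permutes UNIV"
  shows "opt_makespan (perm_act T1 (inv \<pi>)) (perm_act T2 (inv \<pi>)) = opt_makespan T1 T2"
proof -
  have "range (\<lambda>X. makespan X (perm_act T1 (inv \<pi>)) (perm_act T2 (inv \<pi>))) = range (\<lambda>X. makespan X T1 T2)"
  proof (rule range_eqI[where h="\<lambda>X j. X (\<pi> j)"])
    show "makespan X (perm_act T1 (inv \<pi>)) (perm_act T2 (inv \<pi>)) = makespan (\<lambda>j. X (\<pi> j)) T1 T2" for X
      using makespan_perm[OF p] by simp
    show "\<exists>X. (\<lambda>j. X (\<pi> j)) = Y" for Y :: "'n \<Rightarrow> bool"
      by (rule exI[where x="\<lambda>k. Y (inv \<pi> k)"]) (simp add: permutes_inverses(2)[OF p])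
  qed
  then show ?thesis unfolding opt_makespan_def by simp
qed

lemma opt_attained: "\<exists>X. opt_makespan T1 T2 = makespan X T1 T2"
proof -
  have "opt_makespan T1 T2 \<in> range (\<lambda>X. makespan X T1 T2)"
    unfolding opt_makespan_def by (rule Min_in) auto
  then show ?thesis by auto
qed

lemma opt_le: "opt_makespan T1 T2 \<le> makespan X T1 T2"
  unfolding opt_makespan_def by (rule Min_le) auto

lemma opt_pos:
  fixes T1 T2 :: "real^'n::finite"
  assumes "(T1, T2) \<in> pos_times"
  shows "0 < opt_makespan T1 T2"
proof -
  obtain X where X: "opt_makespan T1 T2 = makespan X T1 T2" using opt_attained by blast
  have p: "\<And>j. 0 < T1 $ j" "\<And>j. 0 < T2 $ j" using assms by (auto simp: pos_times_def)
  have "0 < (\<Sum>j\<in>UNIV. if X j then T1 $ j else T2 $ j)"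
    using p by (intro sum_pos) auto
  also have "\<dots> = (\<Sum>j\<in>UNIV. if X j then T1 $ j else 0) + (\<Sum>j\<in>UNIV. if X j then 0 else T2 $ j)"
    by (simp add: sum.distrib[symmetric]) (intro sum.cong refl, simp)
  finally have "0 < (\<Sum>j\<in>UNIV. if X j then T1 $ j else 0) + (\<Sum>j\<in>UNIV. if X j then 0 else T2 $ j)" .
  then show ?thesis unfolding X makespan_alt by linarith
qed

lemma makespan_scale:
  fixes T1 T2 :: "real^'n::finite"
  assumes "0 < c" "c \<le> 1" "\<And>j. 0 \<le> T1 $ j" "\<And>j. 0 \<le> T2 $ j"
  shows "c * makespan X T1 T2 \<le> makespan X (c *\<^sub>R T1) T2"
    and "makespan X (c *\<^sub>R T1) T2 \<le> makespan X T1 T2"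
proof -
  define a where "a = (\<Sum>j\<in>UNIV. if X j then T1 $ j else 0)"
  define b where "b = (\<Sum>j\<in>UNIV. if X j then 0 else T2 $ j)"
  have a': "(\<Sum>j\<in>UNIV. if X j then (c *\<^sub>R T1) $ j else 0) = c * a"
    unfolding a_def sum_distrib_left by (intro sum.cong refl) simp
  have a0: "0 \<le> a" unfolding a_def using assms by (auto intro: sum_nonneg)
  have b0: "0 \<le> b" unfolding b_def using assms by (auto intro: sum_nonneg)
  have m1: "makespan X T1 T2 = max a b" unfolding makespan_alt a_def b_def ..
  have m2: "makespan X (c *\<^sub>R T1) T2 = max (c * a) b" unfolding makespan_alt a' b_def ..
  have cb: "c * b \<le> b" using mult_left_le_one_le[of b c] assms(1,2) b0 by simp
  have "c * max a b \<le> max (c * a) b"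
  proof (cases "a \<le> b")
    case True
    then have "max a b = b" by simp
    then show ?thesis using cb by simp
  next
    case False
    then have "max a b = a" by simp
    then show ?thesis by simp
  qed
  then show "c * makespan X T1 T2 \<le> makespan X (c *\<^sub>R T1) T2"
    unfolding m1 m2 .
  have "c * a \<le> a" using mult_left_le_one_le[of a c] assms(1,2) a0 by simp
  then show "makespan X (c *\<^sub>R T1) T2 \<le> makespan X T1 T2"
    unfolding m1 m2 by (auto simp: max_def)
qed

lemma opt_scale:
  fixes T1 T2 :: "real^'n::finite"
  assumes "0 < c" "c \<le> 1" "\<And>j. 0 \<le> T1 $ j" "\<And>j. 0 \<le> T2 $ j"
  shows "opt_makespan (c *\<^sub>R T1) T2 \<le> opt_makespan T1 T2"
proof -
  obtain X where X: "opt_makespan T1 T2 = makespan X T1 T2" using opt_attained by blast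
  have "opt_makespan (c *\<^sub>R T1) T2 \<le> makespan X (c *\<^sub>R T1) T2" by (rule opt_le)
  also have "\<dots> \<le> makespan X T1 T2" by (rule makespan_scale(2)[OF assms])
  finally show ?thesis using X by simp
qed

lemma meas_P: "sets P = sets borel \<Longrightarrow> f \<in> borel_measurable borel \<Longrightarrow> f \<in> borel_measurable P"
  using measurable_cong_sets by blast

lemma act_nth_meas[measurable]: "(\<lambda>z. act a z $ j) \<in> borel_measurable borel"
  by (rule measurable_compose[OF act_measurable borel_measurable_nth])

lemma integrable_makespan:
  fixes T1 T2 :: "real^'n::finite"
  assumes P: "prob_space P" "sets P = sets borel"
    and D: "\<And>j. Measurable.pred borel (\<lambda>z. D z j)"
    and T: "\<And>j. 0 \<le> T1 $ j" "\<And>j. 0 \<le> T2 $ j"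
  shows "integrable P (\<lambda>z. makespan (D z) T1 T2)"
proof -
  have fm: "finite_measure P" by (rule prob_space.axioms(1)[OF P(1)])
  have m: "(\<lambda>z. makespan (D z) T1 T2) \<in> borel_measurable P"
    by (rule meas_P[OF P(2) makespan_meas[OF D]])
  show ?thesis
  proof (rule finite_measure.integrable_const_bound[OF fm _ m])
    show "AE x in P. norm (makespan (D x) T1 T2) \<le> (\<Sum>j\<in>UNIV. T1 $ j) + (\<Sum>j\<in>UNIV. T2 $ j)"
      using makespan_nonneg[OF T] makespan_le[OF T] by auto
  qed
qed

lemma AE_pos:
  assumes "P \<in> Pn"
  shows "AE z in P. z \<in> pos"
proof -
  have P: "prob_space P" and m: "measure P pos = 1"
    using assms by (auto simp: Pn_def pos_def)
  show ?thesis by (rule prob_space.AE_prob_1[OF P m])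
qed

lemma le_variant:
  fixes S1 S2 :: "real^'n::finite"
  assumes P: "P \<in> Pn" and r: "0 \<le> r"
    and good: "\<And>T1 T2. (T1, T2) \<in> pos_times \<Longrightarrow> exp_makespan P T1 T2 \<le> r * opt_makespan T1 T2"
    and S: "(S1, S2) \<in> pos_times"
  shows "(\<integral>z. makespan (\<lambda>j. S1 $ j / S2 $ j \<le> z $ j) S1 S2 \<partial>P) \<le> r * opt_makespan S1 S2"
proof -
  have Pp: "prob_space P" "sets P = sets borel" using P by (auto simp: Pn_def)
  have fm: "finite_measure P" by (rule prob_space.axioms(1)[OF Pp(1)])
  have S1p: "\<And>j. 0 < S1 $ j" and S2p: "\<And>j. 0 < S2 $ j" using S by (auto simp: pos_times_def)
  have S1n: "\<And>j. 0 \<le> S1 $ j" and S2n: "\<And>j. 0 \<le> S2 $ j" using S1p S2p less_imp_le by auto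
  define c where "c k = 1 - inverse (real (Suc k)) / 2" for k
  have ci: "0 < inverse (real (Suc k))" "inverse (real (Suc k)) \<le> 1" for k
    by (auto simp: inverse_le_1_iff)
  have c0: "0 < c k" and c1: "c k < 1" for k
    using ci[of k] unfolding c_def by linarith+
  have clim0: "(\<lambda>k. 1 - inverse (real (Suc k)) / 2) \<longlonglongrightarrow> 1 - 0 / 2"
    by (intro tendsto_diff tendsto_const tendsto_divide LIMSEQ_inverse_real_of_nat) simp
  have clim: "c \<longlonglongrightarrow> 1"
    using clim0 by (simp add: c_def[abs_def])
  define s where "s k z = makespan (alg_alloc z (c k *\<^sub>R S1) S2) S1 S2" for k z
  define f where "f z = makespan (\<lambda>j. S1 $ j / S2 $ j \<le> z $ j) S1 S2" for z
  have meas_s: "s k \<in> borel_measurable P" for k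
  proof -
    have "(\<lambda>z. makespan (alg_alloc z (c k *\<^sub>R S1) S2) S1 S2) \<in> borel_measurable borel"
      unfolding alg_alloc_def by (rule makespan_meas) measurable
    then show ?thesis unfolding s_def[abs_def] by (rule meas_P[OF Pp(2)])
  qed
  have meas_f: "f \<in> borel_measurable P"
  proof -
    have "(\<lambda>z. makespan (\<lambda>j. S1 $ j / S2 $ j \<le> z $ j) S1 S2) \<in> borel_measurable borel"
      by (rule makespan_meas) measurable
    then show ?thesis unfolding f_def[abs_def] by (rule meas_P[OF Pp(2)])
  qed
  define B where "B = (\<Sum>j\<in>UNIV. S1 $ j) + (\<Sum>j\<in>UNIV. S2 $ j)"
  have bnd: "norm (s k z) \<le> B" for k z
    using makespan_nonneg[OF S1n S2n] makespan_le[OF S1n S2n] unfolding s_def B_def by auto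
  have lim: "(\<lambda>k. s k z) \<longlonglongrightarrow> f z" for z
  proof -
    have ev: "\<forall>\<^sub>F k in sequentially. \<forall>j. alg_alloc z (c k *\<^sub>R S1) S2 j = (S1 $ j / S2 $ j \<le> z $ j)"
    proof (rule eventually_all_finite)
      fix j
      define \<rho> where "\<rho> = S1 $ j / S2 $ j"
      have \<rho>0: "0 < \<rho>" using S1p S2p unfolding \<rho>_def by simp
      have eq: "alg_alloc z (c k *\<^sub>R S1) S2 j = (c k * \<rho> < z $ j)" for k
        by (simp add: alg_alloc_def \<rho>_def)
      show "\<forall>\<^sub>F k in sequentially. alg_alloc z (c k *\<^sub>R S1) S2 j = (S1 $ j / S2 $ j \<le> z $ j)"
        unfolding \<rho>_def[symmetric] eq
      proof (cases "\<rho> \<le> z $ j")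
        case True
        have "c k * \<rho> < \<rho>" for k using mult_strict_right_mono[OF c1[of k] \<rho>0] by simp
        then have "\<forall>k. (c k * \<rho> < z $ j) = (\<rho> \<le> z $ j)" using True by (metis less_le_trans)
        then show "\<forall>\<^sub>F k in sequentially. (c k * \<rho> < z $ j) = (\<rho> \<le> z $ j)"
          by (simp add: always_eventually)
      next
        case False
        have "(\<lambda>k. c k * \<rho>) \<longlonglongrightarrow> 1 * \<rho>" by (intro tendsto_mult clim tendsto_const)
        moreover have "z $ j < 1 * \<rho>" using False by simp
        ultimately have "\<forall>\<^sub>F k in sequentially. z $ j < c k * \<rho>" by (rule order_tendstoD(1))
        then show "\<forall>\<^sub>F k in sequentially. (c k * \<rho> < z $ j) = (\<rho> \<le> z $ j)"
          by eventually_elim (use False in auto)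
      qed
    qed
    then have "\<forall>\<^sub>F k in sequentially. alg_alloc z (c k *\<^sub>R S1) S2 = (\<lambda>j. S1 $ j / S2 $ j \<le> z $ j)"
      by eventually_elim (simp add: fun_eq_iff)
    then have "\<forall>\<^sub>F k in sequentially. s k z = f z"
      by eventually_elim (simp add: s_def f_def)
    then show ?thesis by (rule tendsto_eventually)
  qed
  have conv: "(\<lambda>k. \<integral>z. s k z \<partial>P) \<longlonglongrightarrow> (\<integral>z. f z \<partial>P)"
  proof (rule integral_dominated_convergence[where w="\<lambda>_. B"])
    show "f \<in> borel_measurable P" by (rule meas_f)
    show "s k \<in> borel_measurable P" for k by (rule meas_s)
    show "integrable P (\<lambda>_. B)" by (rule finite_measure.integrable_const[OF fm])
    show "AE x in P. (\<lambda>k. s k x) \<longlonglongrightarrow> f x" using lim by simp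
    show "AE x in P. norm (s k x) \<le> B" for k using bnd by simp
  qed
  have ub: "(\<integral>z. s k z \<partial>P) \<le> r * opt_makespan S1 S2 / c k" for k
  proof -
    have cS1: "(c k *\<^sub>R S1, S2) \<in> pos_times"
      using S1p S2p c0[of k] by (auto simp: pos_times_def)
    have cS1n: "\<And>j. 0 \<le> (c k *\<^sub>R S1) $ j" using cS1 by (auto simp: pos_times_def less_imp_le)
    have int1: "integrable P (s k)"
      unfolding s_def[abs_def] alg_alloc_def
      by (rule integrable_makespan[OF Pp _ S1n S2n]) measurable
    have int2: "integrable P (\<lambda>z. makespan (alg_alloc z (c k *\<^sub>R S1) S2) (c k *\<^sub>R S1) S2)"
      unfolding alg_alloc_def
      by (rule integrable_makespan[OF Pp _ cS1n S2n]) measurable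
    have "(\<integral>z. s k z \<partial>P) \<le> (\<integral>z. makespan (alg_alloc z (c k *\<^sub>R S1) S2) (c k *\<^sub>R S1) S2 / c k \<partial>P)"
    proof (rule integral_mono[OF int1])
      show "integrable P (\<lambda>z. makespan (alg_alloc z (c k *\<^sub>R S1) S2) (c k *\<^sub>R S1) S2 / c k)"
        using int2 by simp
      fix z
      have "c k * s k z \<le> makespan (alg_alloc z (c k *\<^sub>R S1) S2) (c k *\<^sub>R S1) S2"
        unfolding s_def by (rule makespan_scale(1)[OF c0 less_imp_le[OF c1] S1n S2n])
      then show "s k z \<le> makespan (alg_alloc z (c k *\<^sub>R S1) S2) (c k *\<^sub>R S1) S2 / c k"
        using c0[of k] by (simp add: pos_le_divide_eq mult.commute)
    qed
    also have "\<dots> = exp_makespan P (c k *\<^sub>R S1) S2 / c k"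
      by (simp add: exp_makespan_def)
    also have "\<dots> \<le> r * opt_makespan (c k *\<^sub>R S1) S2 / c k"
      using good[OF cS1] c0[of k] by (simp add: divide_right_mono)
    also have "\<dots> \<le> r * opt_makespan S1 S2 / c k"
      using opt_scale[OF c0 less_imp_le[OF c1] S1n S2n] r c0[of k]
      by (intro divide_right_mono mult_left_mono) auto
    finally show ?thesis .
  qed
  have "(\<lambda>k. r * opt_makespan S1 S2 / c k) \<longlonglongrightarrow> r * opt_makespan S1 S2 / 1"
    by (intro tendsto_divide tendsto_const clim) simp
  then have "(\<integral>z. f z \<partial>P) \<le> r * opt_makespan S1 S2 / 1"
    using ub by (intro LIMSEQ_le[OF conv]) auto
  then show ?thesis unfolding f_def by simp
qed

lemma K_bound:
  fixes T1 T2 :: "real^'n::finite"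
  assumes P: "P \<in> Pn" and r: "0 \<le> r"
    and good: "\<And>T1 T2. (T1, T2) \<in> pos_times \<Longrightarrow> exp_makespan P T1 T2 \<le> r * opt_makespan T1 T2"
    and T: "(T1, T2) \<in> pos_times" and a: "a \<in> Grp"
  shows "(\<integral>z. makespan (alg_alloc (act a z) T1 T2) T1 T2 \<partial>P) \<le> r * opt_makespan T1 T2"
proof -
  have Pp: "prob_space P" "sets P = sets borel" using P by (auto simp: Pn_def)
  obtain g \<pi> where a_eq: "a = (g, \<pi>)" by (cases a)
  have p: "\<pi> permutes UNIV" using a by (simp add: a_eq Grp_def)
  define U1 where "U1 = perm_act T1 (inv \<pi>)"
  define U2 where "U2 = perm_act T2 (inv \<pi>)"
  have T1p: "\<And>j. 0 < T1 $ j" and T2p: "\<And>j. 0 < T2 $ j" using T by (auto simp: pos_times_def)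
  have U1p: "\<And>j. 0 < U1 $ j" and U2p: "\<And>j. 0 < U2 $ j"
    using T1p T2p by (auto simp: U1_def U2_def perm_act_nth)
  have U: "(U1, U2) \<in> pos_times" and U': "(U2, U1) \<in> pos_times"
    using U1p U2p by (auto simp: pos_times_def)
  have optU: "opt_makespan U1 U2 = opt_makespan T1 T2"
    unfolding U1_def U2_def by (rule opt_perm[OF p])
  have inv_pi: "inv \<pi> (\<pi> j) = j" for j using permutes_inverses(2)[OF p] by simp
  have act_nth: "act a z $ j = (if g then 1 / z $ \<pi> j else z $ \<pi> j)" for z j
    by (cases g) (simp_all add: a_eq act_def perm_act_def inv_act_def)
  have ratio_eq: "T1 $ j / T2 $ j = U1 $ (\<pi> j) / U2 $ (\<pi> j)" for j
    by (simp add: U1_def U2_def perm_act_nth inv_pi)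
  have mk: "makespan (alg_alloc (act a z) T1 T2) T1 T2
      = makespan (\<lambda>k. U1 $ k / U2 $ k < (if g then 1 / z $ k else z $ k)) U1 U2" for z
  proof -
    have "alg_alloc (act a z) T1 T2 = (\<lambda>j. (\<lambda>k. U1 $ k / U2 $ k < (if g then 1 / z $ k else z $ k)) (\<pi> j))"
      by (rule ext) (simp add: alg_alloc_def act_nth ratio_eq)
    then show ?thesis
      using makespan_perm[OF p, of "\<lambda>k. U1 $ k / U2 $ k < (if g then 1 / z $ k else z $ k)" T1 T2]
      by (simp add: U1_def U2_def)
  qed
  have meas1: "(\<lambda>z. makespan (alg_alloc (act a z) T1 T2) T1 T2) \<in> borel_measurable P"
    unfolding alg_alloc_def by (rule meas_P[OF Pp(2)], rule makespan_meas) measurable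
  show ?thesis
  proof (cases g)
    case False
    have "(\<integral>z. makespan (alg_alloc (act a z) T1 T2) T1 T2 \<partial>P) = exp_makespan P U1 U2"
      unfolding exp_makespan_def mk using False by (simp add: alg_alloc_def)
    also have "\<dots> \<le> r * opt_makespan U1 U2" by (rule good[OF U])
    finally show ?thesis using optU by simp
  next
    case True
    have meas2: "(\<lambda>z. makespan (\<lambda>k. U2 $ k / U1 $ k \<le> z $ k) U2 U1) \<in> borel_measurable P"
      by (rule meas_P[OF Pp(2)], rule makespan_meas) measurable
    have ae: "AE z in P. makespan (alg_alloc (act a z) T1 T2) T1 T2 = makespan (\<lambda>k. U2 $ k / U1 $ k \<le> z $ k) U2 U1"
      using AE_pos[OF P]
    proof eventually_elim
      case (elim z)
      then have zp: "0 < z $ k" for k by (simp add: pos_def)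
      have iff: "(U1 $ k / U2 $ k < 1 / z $ k) = (\<not> (U2 $ k / U1 $ k \<le> z $ k))" for k
      proof -
        have "(U1 $ k / U2 $ k < 1 / z $ k) = (U1 $ k * z $ k < U2 $ k)"
          using zp[of k] U1p[of k] U2p[of k] by (simp add: field_simps)
        also have "\<dots> = (\<not> (U2 $ k / U1 $ k \<le> z $ k))"
          using zp[of k] U1p[of k] U2p[of k] by (simp add: field_simps not_le mult.commute)
        finally show ?thesis .
      qed
      have "makespan (alg_alloc (act a z) T1 T2) T1 T2 = makespan (\<lambda>k. \<not> (U2 $ k / U1 $ k \<le> z $ k)) U1 U2"
        unfolding mk using True by (simp add: iff)
      also have "\<dots> = makespan (\<lambda>k. U2 $ k / U1 $ k \<le> z $ k) U2 U1"
        by (rule makespan_swap)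
      finally show ?case .
    qed
    have "(\<integral>z. makespan (alg_alloc (act a z) T1 T2) T1 T2 \<partial>P) = (\<integral>z. makespan (\<lambda>k. U2 $ k / U1 $ k \<le> z $ k) U2 U1 \<partial>P)"
      by (rule integral_cong_AE[OF meas1 meas2 ae])
    also have "\<dots> \<le> r * opt_makespan U2 U1"
      by (rule le_variant[OF P r good U'])
    finally show ?thesis using optU opt_swap[of U2 U1] by simp
  qed
qed

lemma exp_symm_le:
  fixes T1 T2 :: "real^'n::finite"
  assumes P: "P \<in> Pn" and r: "0 \<le> r"
    and good: "\<And>T1 T2. (T1, T2) \<in> pos_times \<Longrightarrow> exp_makespan P T1 T2 \<le> r * opt_makespan T1 T2"
    and T: "(T1, T2) \<in> pos_times"
  shows "exp_makespan (symm P) T1 T2 \<le> r * opt_makespan T1 T2"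
proof -
  have Pp: "prob_space P" "sets P = sets borel" using P by (auto simp: Pn_def)
  have Qp: "prob_space (symm P)" "sets (symm P) = sets borel" by (rule symm_prob[OF Pp])+
  have T1n: "\<And>j. 0 \<le> T1 $ j" and T2n: "\<And>j. 0 \<le> T2 $ j" using T by (auto simp: pos_times_def less_imp_le)
  have Fm: "(\<lambda>z. makespan (alg_alloc z T1 T2) T1 T2) \<in> borel_measurable borel"
    unfolding alg_alloc_def by (rule makespan_meas) measurable
  have F0: "0 \<le> makespan X T1 T2" for X by (rule makespan_nonneg[OF T1n T2n])
  have Fem: "(\<lambda>z. ennreal (makespan (alg_alloc z T1 T2) T1 T2)) \<in> borel_measurable borel"
    using Fm by (simp add: F0)
  have opt0: "0 \<le> r * opt_makespan T1 T2" using r opt_pos[OF T] by simp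
  have each: "(\<integral>\<^sup>+z. ennreal (makespan (alg_alloc (act a z) T1 T2) T1 T2) \<partial>P) \<le> ennreal (r * opt_makespan T1 T2)"
    if a: "a \<in> Grp" for a
  proof -
    have int: "integrable P (\<lambda>z. makespan (alg_alloc (act a z) T1 T2) T1 T2)"
      unfolding alg_alloc_def by (rule integrable_makespan[OF Pp _ T1n T2n]) measurable
    have "(\<integral>\<^sup>+z. ennreal (makespan (alg_alloc (act a z) T1 T2) T1 T2) \<partial>P)
        = ennreal (\<integral>z. makespan (alg_alloc (act a z) T1 T2) T1 T2 \<partial>P)"
      by (rule nn_integral_eq_integral[OF int]) (simp add: F0)
    also have "\<dots> \<le> ennreal (r * opt_makespan T1 T2)"
      by (rule ennreal_leI, rule K_bound[OF P r good T a])
    finally show ?thesis .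
  qed
  have "(\<integral>\<^sup>+z. ennreal (makespan (alg_alloc z T1 T2) T1 T2) \<partial>symm P)
      = (\<Sum>a\<in>(Grp :: (bool \<times> ('n \<Rightarrow> 'n)) set). ennreal (1 / real (card (Grp :: (bool \<times> ('n \<Rightarrow> 'n)) set))) * (\<integral>\<^sup>+z. ennreal (makespan (alg_alloc (act a z) T1 T2) T1 T2) \<partial>P))"
    by (rule nn_integral_symm[OF Pp Fem])
  also have "\<dots> \<le> (\<Sum>a\<in>(Grp :: (bool \<times> ('n \<Rightarrow> 'n)) set). ennreal (1 / real (card (Grp :: (bool \<times> ('n \<Rightarrow> 'n)) set))) * ennreal (r * opt_makespan T1 T2))"
    by (intro sum_mono mult_left_mono each) auto
  also have "\<dots> = ennreal (r * opt_makespan T1 T2)"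
    by (rule card_inv_sum[OF finite_Grp Grp_ne])
  finally have le: "(\<integral>\<^sup>+z. ennreal (makespan (alg_alloc z T1 T2) T1 T2) \<partial>symm P) \<le> ennreal (r * opt_makespan T1 T2)" .
  have "exp_makespan (symm P) T1 T2 = enn2real (\<integral>\<^sup>+z. ennreal (makespan (alg_alloc z T1 T2) T1 T2) \<partial>symm P)"
    unfolding exp_makespan_def
    by (rule integral_eq_nn_integral) (simp_all add: F0 meas_P[OF Qp(2) Fm])
  also have "\<dots> \<le> r * opt_makespan T1 T2"
    by (rule enn2real_leI[OF opt0 le])
  finally show ?thesis .
qed

theorem theorem4:
  shows "(INF P\<in>(Pn :: (real^'n::finite) measure set). ratio P)
       = (INF P\<in>{P \<in> (Pn :: (real^'n::finite) measure set). symmetric_dist P}. ratio P)"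
proof (rule antisym)
  show "(INF P\<in>(Pn :: (real^'n::finite) measure set). ratio P)
       \<le> (INF P\<in>{P \<in> (Pn :: (real^'n::finite) measure set). symmetric_dist P}. ratio P)"
    by (rule INF_superset_mono) auto
  show "(INF P\<in>{P \<in> (Pn :: (real^'n::finite) measure set). symmetric_dist P}. ratio P)
       \<le> (INF P\<in>(Pn :: (real^'n::finite) measure set). ratio P)"
  proof (rule INF_greatest)
    fix P :: "(real^'n) measure" assume P: "P \<in> Pn"
    show "(INF P\<in>{P \<in> (Pn :: (real^'n::finite) measure set). symmetric_dist P}. ratio P) \<le> ratio P"
    proof (cases "ratio P = \<infinity>")
      case True
      then show ?thesis by simp
    next
      case False
      have Pp: "prob_space P" "sets P = sets borel" using P by (auto simp: Pn_def)
      define one :: "real^'n" where "one = (\<chi> j. 1)"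
      have onep: "(one, one) \<in> pos_times" by (simp add: pos_times_def one_def)
      have lb: "ereal (exp_makespan P one one / opt_makespan one one) \<le> ratio P"
        unfolding ratio_def
        using SUP_upper[OF onep, of "\<lambda>T. ereal (exp_makespan P (fst T) (snd T) / opt_makespan (fst T) (snd T))"]
        by simp
      obtain r where r: "ratio P = ereal r" using False lb by (cases "ratio P") auto
      have e0: "0 \<le> exp_makespan P one one"
        unfolding exp_makespan_def
        by (rule integral_nonneg_AE) (simp add: makespan_nonneg one_def)
      have "0 \<le> exp_makespan P one one / opt_makespan one one"
        using e0 opt_pos[OF onep] by simp
      then have r0: "0 \<le> r" using lb r by simp
      have good: "exp_makespan P T1 T2 \<le> r * opt_makespan T1 T2" if T: "(T1, T2) \<in> pos_times" for T1 T2
      proof -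
        have "ereal (exp_makespan P T1 T2 / opt_makespan T1 T2) \<le> ereal r"
          using SUP_upper[OF T, of "\<lambda>T. ereal (exp_makespan P (fst T) (snd T) / opt_makespan (fst T) (snd T))"] r
          unfolding ratio_def by simp
        then have "exp_makespan P T1 T2 / opt_makespan T1 T2 \<le> r" by simp
        then show ?thesis using opt_pos[OF T] by (simp add: pos_divide_le_eq)
      qed
      have Q: "symm P \<in> {P \<in> (Pn :: (real^'n::finite) measure set). symmetric_dist P}"
        using symm_Pn[OF P] symm_symmetric[OF Pp] by simp
      have "ratio (symm P) \<le> ereal r"
        unfolding ratio_def
      proof (rule SUP_least)
        fix T :: "(real^'n) \<times> (real^'n)" assume T: "T \<in> pos_times"
        obtain T1 T2 where TT: "T = (T1, T2)" by (cases T)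
        have T': "(T1, T2) \<in> pos_times" using T TT by simp
        have "exp_makespan (symm P) T1 T2 \<le> r * opt_makespan T1 T2"
          by (rule exp_symm_le[OF P r0 good T'])
        then have "exp_makespan (symm P) T1 T2 / opt_makespan T1 T2 \<le> r"
          using opt_pos[OF T'] by (simp add: pos_divide_le_eq)
        then show "ereal (exp_makespan (symm P) (fst T) (snd T) / opt_makespan (fst T) (snd T)) \<le> ereal r"
          using TT by simp
      qed
      then have "ratio (symm P) \<le> ratio P" using r by simp
      then show ?thesis using INF_lower[OF Q, of ratio] by (rule order_trans[rotated])
    qed
  qed
qed

end
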